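(* Let $R$ be a commutative ring with identity, $I$ a proper ideal of $R$, and $T=R\propto R/I$. The following are equivalent: (1) $T$ is semi-complemented; (2) $T$ is semi-complemented and $I\subseteq\mathfrak{N}(R)$; (3) $T$ satisfies Property $D$; (4) $R$ satisfies Property $D$ and $R/I$ is a torsion-free $R$-module.
   Context: For an $R$-module $M$, the trivial extension $R\propto M$ is $R\times M$ with coordinatewise addition and multiplication $(r,m)(s,n)=(rs,rn+sm)$. $\mathfrak{N}(A)$ is the nilradical and $\mathrm{reg}(A)$ the set of regular elements. An element $a$ is complemented if there is $b$ with $ab=0$ and $a+b\in\mathrm{reg}(A)$; $A$ is semi-complemented if every element of $A\setminus\mathfrak{N}(A)$ is complemented; $A$ satisfies Property $D$ if $A\setminus\mathfrak{N}(A)=\mathrm{reg}(A)$. An $R$-module $M$ is torsion-free if $rm=0$ with $r\in\mathrm{reg}(R)$ implies $m=0$. *)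

theory Defs
  imports "HOL-Algebra.QuotRing" "HOL-Algebra.Module"
begin

definition reg_elems :: "('a, 'c) ring_scheme \<Rightarrow> 'a set" where
  "reg_elems A = {a \<in> carrier A. \<forall>b \<in> carrier A. a \<otimes>\<^bsub>A\<^esub> b = \<zero>\<^bsub>A\<^esub> \<longrightarrow> b = \<zero>\<^bsub>A\<^esub>}"

definition nilrad :: "('a, 'c) ring_scheme \<Rightarrow> 'a set" where
  "nilrad A = {a \<in> carrier A. \<exists>n::nat. a [^]\<^bsub>A\<^esub> n = \<zero>\<^bsub>A\<^esub>}"

definition complemented :: "('a, 'c) ring_scheme \<Rightarrow> 'a \<Rightarrow> bool" where
  "complemented A a \<longleftrightarrow> (\<exists>b \<in> carrier A. a \<otimes>\<^bsub>A\<^esub> b = \<zero>\<^bsub>A\<^esub> \<and> a \<oplus>\<^bsub>A\<^esub> b \<in> reg_elems A)"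

definition semi_complemented :: "('a, 'c) ring_scheme \<Rightarrow> bool" where
  "semi_complemented A \<longleftrightarrow> (\<forall>a \<in> carrier A - nilrad A. complemented A a)"

definition property_D :: "('a, 'c) ring_scheme \<Rightarrow> bool" where
  "property_D A \<longleftrightarrow> carrier A - nilrad A = reg_elems A"

definition torsion_free :: "('a, 'c) ring_scheme \<Rightarrow> ('a, 'b, 'd) module_scheme \<Rightarrow> bool" where
  "torsion_free R M \<longleftrightarrow>
     (\<forall>r \<in> reg_elems R. \<forall>m \<in> carrier M. r \<odot>\<^bsub>M\<^esub> m = \<zero>\<^bsub>M\<^esub> \<longrightarrow> m = \<zero>\<^bsub>M\<^esub>)"

definition triv_ext :: "('a, 'c) ring_scheme \<Rightarrow> ('a, 'b, 'd) module_scheme \<Rightarrow> ('a \<times> 'b) ring" where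
  "triv_ext R M =
     \<lparr>carrier = carrier R \<times> carrier M,
      mult = (\<lambda>x y. (fst x \<otimes>\<^bsub>R\<^esub> fst y, (fst x \<odot>\<^bsub>M\<^esub> snd y) \<oplus>\<^bsub>M\<^esub> (fst y \<odot>\<^bsub>M\<^esub> snd x))),
      one = (\<one>\<^bsub>R\<^esub>, \<zero>\<^bsub>M\<^esub>),
      zero = (\<zero>\<^bsub>R\<^esub>, \<zero>\<^bsub>M\<^esub>),
      add = (\<lambda>x y. (fst x \<oplus>\<^bsub>R\<^esub> fst y, snd x \<oplus>\<^bsub>M\<^esub> snd y))\<rparr>"

definition quot_module :: "('a, 'c) ring_scheme \<Rightarrow> 'a set \<Rightarrow> ('a, 'a set) module" where
  "quot_module R I =
     \<lparr>carrier = carrier (R Quot I),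
      mult = mult (R Quot I),
      one = one (R Quot I),
      zero = zero (R Quot I),
      add = add (R Quot I),
      smult = (\<lambda>r X. (I +>\<^bsub>R\<^esub> r) \<otimes>\<^bsub>R Quot I\<^esub> X)\<rparr>"

end

theory Submission
  imports Defs
begin

locale TE = cring R + ideal I R for R (structure) and I +
  assumes proper: "I \<noteq> carrier R"
begin

abbreviation Q where "Q \<equiv> R Quot I"
abbreviation TT where "TT \<equiv> triv_ext R (quot_module R I)"
definition NZQ where "NZQ r \<longleftrightarrow> (\<forall>Y\<in>carrier Q. (I +> r) \<otimes>\<^bsub>Q\<^esub> Y = \<zero>\<^bsub>Q\<^esub> \<longrightarrow> Y = \<zero>\<^bsub>Q\<^esub>)"

lemma Qc: "cring Q" by (rule quotient_is_cring[OF is_cring])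
lemma hom: "ring_hom_cring R Q ((+>) I)" by (rule rcos_ring_hom_cring[OF is_cring])

lemma phi_carr[simp]: "r \<in> carrier R \<Longrightarrow> I +> r \<in> carrier Q"
  by (rule ring_hom_closed[OF rcos_ring_hom])
lemma phi_mult[simp]: "r \<in> carrier R \<Longrightarrow> s \<in> carrier R \<Longrightarrow> I +> (r \<otimes> s) = (I +> r) \<otimes>\<^bsub>Q\<^esub> (I +> s)"
  by (rule ring_hom_mult[OF rcos_ring_hom])
lemma phi_add[simp]: "r \<in> carrier R \<Longrightarrow> s \<in> carrier R \<Longrightarrow> I +> (r \<oplus> s) = (I +> r) \<oplus>\<^bsub>Q\<^esub> (I +> s)"
  by (rule ring_hom_add[OF rcos_ring_hom])
lemma phi_one[simp]: "I +> \<one> = \<one>\<^bsub>Q\<^esub>"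
  by (simp add: FactRing_def)
lemma zeroQ: "\<zero>\<^bsub>Q\<^esub> = I" unfolding FactRing_def by (simp only: ring_record_simps)
lemma phi_zero_iff: "r \<in> carrier R \<Longrightarrow> (I +> r = \<zero>\<^bsub>Q\<^esub>) \<longleftrightarrow> r \<in> I"
proof -
  assume r: "r \<in> carrier R"
  show ?thesis
  proof
    assume h: "I +> r = \<zero>\<^bsub>Q\<^esub>"
    show "r \<in> I" using a_rcos_self[OF r] unfolding h zeroQ .
  next
    assume h: "r \<in> I"
    show "I +> r = \<zero>\<^bsub>Q\<^esub>" unfolding zeroQ by (rule a_rcos_const[OF h])
  qed
qed
lemma zeroI: "\<zero> \<in> I"
  by (rule additive_subgroup.zero_closed[OF ideal.axioms(1)[OF is_ideal]])
lemma phi_zero[simp]: "I +> \<zero> = \<zero>\<^bsub>Q\<^esub>"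
  using phi_zero_iff[of "\<zero>"] zeroI by simp

lemma one_ne_zero: "\<one> \<noteq> \<zero>"
  using proper one_imp_carrier by force
lemma oneQ_ne: "\<one>\<^bsub>Q\<^esub> \<noteq> \<zero>\<^bsub>Q\<^esub>"
  using phi_zero_iff[of \<one>] proper one_imp_carrier by force

lemma phi_pow: "r \<in> carrier R \<Longrightarrow> I +> (r [^] (n::nat)) = (I +> r) [^]\<^bsub>Q\<^esub> n"
  by (induct n) auto

lemma T_carrier: "carrier TT = carrier R \<times> carrier Q"
  by (simp add: triv_ext_def quot_module_def)
lemma T_mult: "(r,X) \<otimes>\<^bsub>TT\<^esub> (s,Y) = (r \<otimes> s, ((I +> r) \<otimes>\<^bsub>Q\<^esub> Y) \<oplus>\<^bsub>Q\<^esub> ((I +> s) \<otimes>\<^bsub>Q\<^esub> X))"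
  by (simp add: triv_ext_def quot_module_def)
lemma T_add: "(r,X) \<oplus>\<^bsub>TT\<^esub> (s,Y) = (r \<oplus> s, X \<oplus>\<^bsub>Q\<^esub> Y)"
  by (simp add: triv_ext_def quot_module_def)
lemma T_zero: "\<zero>\<^bsub>TT\<^esub> = (\<zero>, \<zero>\<^bsub>Q\<^esub>)"
  by (simp add: triv_ext_def quot_module_def)
lemma T_one: "\<one>\<^bsub>TT\<^esub> = (\<one>, \<zero>\<^bsub>Q\<^esub>)"
  by (simp add: triv_ext_def quot_module_def)


sublocale QQ: cring Q by (rule Qc)

lemma T_mult_fst[simp]: "fst (a \<otimes>\<^bsub>TT\<^esub> b) = fst a \<otimes> fst b"
  by (simp add: triv_ext_def)

lemma T_mult_closed: "a \<in> carrier TT \<Longrightarrow> b \<in> carrier TT \<Longrightarrow> a \<otimes>\<^bsub>TT\<^esub> b \<in> carrier TT"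
  by (cases a; cases b) (auto simp: T_carrier T_mult)

lemma T_pow_closed: "a \<in> carrier TT \<Longrightarrow> a [^]\<^bsub>TT\<^esub> (n::nat) \<in> carrier TT"
proof (induct n)
  case 0 then show ?case by (simp add: T_one T_carrier)
next
  case (Suc n) then show ?case unfolding Group.nat_pow_Suc by (simp add: T_mult_closed)
qed

lemma T_pow_fst: "a \<in> carrier TT \<Longrightarrow> fst (a [^]\<^bsub>TT\<^esub> (n::nat)) = fst a [^] n"
proof (induct n)
  case 0 then show ?case by (simp add: T_one)
next
  case (Suc n)
  show ?case unfolding Group.nat_pow_Suc T_mult_fst using Suc by simp
qed

lemma T_pow_snd: assumes "(r,X) \<in> carrier TT"
  shows "\<exists>m\<in>carrier Q. snd ((r,X) [^]\<^bsub>TT\<^esub> (Suc n)) = (I +> r) [^]\<^bsub>Q\<^esub> n \<otimes>\<^bsub>Q\<^esub> m"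
proof (induct n)
  case 0
  have r: "r \<in> carrier R" and X: "X \<in> carrier Q" using assms by (auto simp: T_carrier)
  have "snd ((r,X) [^]\<^bsub>TT\<^esub> (Suc 0)) = X"
    unfolding Group.nat_pow_Suc Group.nat_pow_0 T_one T_mult snd_conv using r X by simp
  then show ?case using X by (intro bexI[of _ X]) simp_all
next
  case (Suc n)
  have r: "r \<in> carrier R" and X: "X \<in> carrier Q" using assms by (auto simp: T_carrier)
  obtain m where m: "m \<in> carrier Q" and e: "snd ((r,X) [^]\<^bsub>TT\<^esub> (Suc n)) = (I +> r) [^]\<^bsub>Q\<^esub> n \<otimes>\<^bsub>Q\<^esub> m"
    using Suc by blast
  have f: "fst ((r,X) [^]\<^bsub>TT\<^esub> (Suc n)) = r [^] Suc n" using T_pow_fst[OF assms] by simp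
  have eq: "(r,X) [^]\<^bsub>TT\<^esub> (Suc n) = (r [^] Suc n, (I +> r) [^]\<^bsub>Q\<^esub> n \<otimes>\<^bsub>Q\<^esub> m)"
    by (rule prod_eqI) (simp only: f fst_conv, simp only: e snd_conv)
  define p where "p = I +> r"
  have p: "p \<in> carrier Q" using r p_def by simp
  have s1: "(r,X) [^]\<^bsub>TT\<^esub> Suc (Suc n) = (r,X) [^]\<^bsub>TT\<^esub> Suc n \<otimes>\<^bsub>TT\<^esub> (r,X)"
    by (rule Group.nat_pow_Suc)
  have "snd ((r,X) [^]\<^bsub>TT\<^esub> (Suc (Suc n))) =
     (I +> (r [^] Suc n)) \<otimes>\<^bsub>Q\<^esub> X \<oplus>\<^bsub>Q\<^esub> (I +> r) \<otimes>\<^bsub>Q\<^esub> ((I +> r) [^]\<^bsub>Q\<^esub> n \<otimes>\<^bsub>Q\<^esub> m)"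
    unfolding s1 eq T_mult snd_conv by (rule refl)
  also have "\<dots> = p [^]\<^bsub>Q\<^esub> Suc n \<otimes>\<^bsub>Q\<^esub> X \<oplus>\<^bsub>Q\<^esub> p \<otimes>\<^bsub>Q\<^esub> (p [^]\<^bsub>Q\<^esub> n \<otimes>\<^bsub>Q\<^esub> m)"
    unfolding p_def phi_pow[OF r] by (rule refl)
  also have "\<dots> = p [^]\<^bsub>Q\<^esub> Suc n \<otimes>\<^bsub>Q\<^esub> X \<oplus>\<^bsub>Q\<^esub> p [^]\<^bsub>Q\<^esub> Suc n \<otimes>\<^bsub>Q\<^esub> m"
  proof -
    have "p \<otimes>\<^bsub>Q\<^esub> (p [^]\<^bsub>Q\<^esub> n \<otimes>\<^bsub>Q\<^esub> m) = p [^]\<^bsub>Q\<^esub> Suc n \<otimes>\<^bsub>Q\<^esub> m"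
      unfolding QQ.nat_pow_Suc2[OF p] using p m by (intro QQ.m_assoc[symmetric]) auto
    then show ?thesis by (rule arg_cong)
  qed
  also have "\<dots> = p [^]\<^bsub>Q\<^esub> Suc n \<otimes>\<^bsub>Q\<^esub> (X \<oplus>\<^bsub>Q\<^esub> m)"
    using p X m by (intro QQ.r_distr[symmetric]) auto
  finally have fin: "snd ((r,X) [^]\<^bsub>TT\<^esub> (Suc (Suc n))) = p [^]\<^bsub>Q\<^esub> Suc n \<otimes>\<^bsub>Q\<^esub> (X \<oplus>\<^bsub>Q\<^esub> m)" .
  show ?case
  proof (rule bexI[of _ "X \<oplus>\<^bsub>Q\<^esub> m"])
    show "snd ((r,X) [^]\<^bsub>TT\<^esub> (Suc (Suc n))) = (I +> r) [^]\<^bsub>Q\<^esub> Suc n \<otimes>\<^bsub>Q\<^esub> (X \<oplus>\<^bsub>Q\<^esub> m)"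
      using fin unfolding p_def .
    show "X \<oplus>\<^bsub>Q\<^esub> m \<in> carrier Q" using X m by simp
  qed
qed

lemma nil_T: assumes "(r,X) \<in> carrier TT"
  shows "(r,X) \<in> nilrad TT \<longleftrightarrow> r \<in> nilrad R"
proof
  assume "(r,X) \<in> nilrad TT"
  then obtain n where "(r,X) [^]\<^bsub>TT\<^esub> (n::nat) = \<zero>\<^bsub>TT\<^esub>" by (auto simp: nilrad_def)
  then have "r [^] n = \<zero>" using T_pow_fst[OF assms, of n] by (simp add: T_zero)
  then show "r \<in> nilrad R" using assms by (auto simp: nilrad_def T_carrier)
next
  assume "r \<in> nilrad R"
  then obtain n where rn: "r [^] (n::nat) = \<zero>" and r: "r \<in> carrier R" by (auto simp: nilrad_def)
  obtain m where m: "m \<in> carrier Q" and e: "snd ((r,X) [^]\<^bsub>TT\<^esub> (Suc n)) = (I +> r) [^]\<^bsub>Q\<^esub> n \<otimes>\<^bsub>Q\<^esub> m"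
    using T_pow_snd[OF assms] by blast
  have p0: "(I +> r) [^]\<^bsub>Q\<^esub> n = \<zero>\<^bsub>Q\<^esub>" using phi_pow[OF r, of n] rn by simp
  have "snd ((r,X) [^]\<^bsub>TT\<^esub> (Suc n)) = \<zero>\<^bsub>Q\<^esub>" using e m by (simp add: p0)
  moreover have "fst ((r,X) [^]\<^bsub>TT\<^esub> (Suc n)) = \<zero>"
    using T_pow_fst[OF assms, of "Suc n"] rn r by simp
  ultimately have "(r,X) [^]\<^bsub>TT\<^esub> (Suc n) = \<zero>\<^bsub>TT\<^esub>" by (simp add: T_zero prod_eq_iff)
  then show "(r,X) \<in> nilrad TT" using assms unfolding nilrad_def by blast
qed

lemma reg_T: assumes "(r,X) \<in> carrier TT"
  shows "(r,X) \<in> reg_elems TT \<longleftrightarrow> r \<in> reg_elems R \<and> NZQ r"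
proof -
  have r: "r \<in> carrier R" and X: "X \<in> carrier Q" using assms by (auto simp: T_carrier)
  show ?thesis
  proof
    assume a: "(r,X) \<in> reg_elems TT"
    have nz: "NZQ r" unfolding NZQ_def
    proof (intro ballI impI)
      fix Y assume Y: "Y \<in> carrier Q" and e: "(I +> r) \<otimes>\<^bsub>Q\<^esub> Y = \<zero>\<^bsub>Q\<^esub>"
      have "(r,X) \<otimes>\<^bsub>TT\<^esub> (\<zero>,Y) = \<zero>\<^bsub>TT\<^esub>" using r X Y e by (simp add: T_mult T_zero)
      moreover have "(\<zero>,Y) \<in> carrier TT" using Y by (simp add: T_carrier)
      ultimately have "(\<zero>,Y) = \<zero>\<^bsub>TT\<^esub>" using a by (auto simp: reg_elems_def)
      then show "Y = \<zero>\<^bsub>Q\<^esub>" by (simp add: T_zero)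
    qed
    have "r \<in> reg_elems R" unfolding reg_elems_def
    proof (safe intro!: r)
      fix t assume t: "t \<in> carrier R" and e: "r \<otimes> t = \<zero>"
      have "(I +> r) \<otimes>\<^bsub>Q\<^esub> (I +> t) = \<zero>\<^bsub>Q\<^esub>" using e r t phi_mult[of r t] by simp
      then have "I +> t = \<zero>\<^bsub>Q\<^esub>" using nz t unfolding NZQ_def by simp
      then have "(r,X) \<otimes>\<^bsub>TT\<^esub> (t,\<zero>\<^bsub>Q\<^esub>) = \<zero>\<^bsub>TT\<^esub>" using r X t e by (simp add: T_mult T_zero)
      moreover have "(t,\<zero>\<^bsub>Q\<^esub>) \<in> carrier TT" using t by (simp add: T_carrier)
      ultimately have "(t,\<zero>\<^bsub>Q\<^esub>) = \<zero>\<^bsub>TT\<^esub>" using a by (auto simp: reg_elems_def)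
      then show "t = \<zero>" by (simp add: T_zero)
    qed
    with nz show "r \<in> reg_elems R \<and> NZQ r" by simp
  next
    assume a: "r \<in> reg_elems R \<and> NZQ r"
    show "(r,X) \<in> reg_elems TT" unfolding reg_elems_def
    proof (safe intro!: assms)
      fix t Y assume tY: "(t,Y) \<in> carrier TT" and e: "(r,X) \<otimes>\<^bsub>TT\<^esub> (t,Y) = \<zero>\<^bsub>TT\<^esub>"
      have t: "t \<in> carrier R" and Y: "Y \<in> carrier Q" using tY by (auto simp: T_carrier)
      have "r \<otimes> t = \<zero>" using e by (simp add: T_mult T_zero)
      then have t0: "t = \<zero>" using a t by (auto simp: reg_elems_def)
      have "(I +> r) \<otimes>\<^bsub>Q\<^esub> Y = \<zero>\<^bsub>Q\<^esub>" using e t0 X Y r by (simp add: T_mult T_zero)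
      then have "Y = \<zero>\<^bsub>Q\<^esub>" using a Y by (auto simp: NZQ_def)
      then show "(t,Y) = \<zero>\<^bsub>TT\<^esub>" using t0 by (simp add: T_zero)
    qed
  qed
qed


lemma reg_carr: "reg_elems R \<subseteq> carrier R" by (auto simp: reg_elems_def)

lemma reg_nonnil: assumes "r \<in> reg_elems R" shows "r \<notin> nilrad R"
proof
  assume "r \<in> nilrad R"
  then obtain n where n: "r [^] (n::nat) = \<zero>" by (auto simp: nilrad_def)
  have r: "r \<in> carrier R" using assms by (auto simp: reg_elems_def)
  have "r [^] (n::nat) \<noteq> \<zero>" for n
  proof (induct n)
    case 0 then show ?case using one_ne_zero by simp
  next
    case (Suc n)
    have "r \<otimes> r [^] n = r [^] Suc n" using r by (simp add: m_comm)
    then show ?case using Suc assms r by (auto simp: reg_elems_def)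
  qed
  with n show False by blast
qed

lemma pow_reg: assumes "u \<in> reg_elems R" shows "u [^] (n::nat) \<in> reg_elems R"
proof (induct n)
  case 0 then show ?case by (auto simp: reg_elems_def)
next
  case (Suc n)
  have u: "u \<in> carrier R" using assms by (auto simp: reg_elems_def)
  show ?case unfolding reg_elems_def
  proof (safe)
    show "u [^] Suc n \<in> carrier R" using u by simp
    fix t assume t: "t \<in> carrier R" and e: "u [^] Suc n \<otimes> t = \<zero>"
    have "u [^] n \<otimes> (u \<otimes> t) = \<zero>" using e u t by (simp add: m_assoc)
    then have "u \<otimes> t = \<zero>" using Suc u t by (auto simp: reg_elems_def)
    then show "t = \<zero>" using assms t by (auto simp: reg_elems_def)
  qed
qed

lemma reg_minus_nil: assumes r: "r \<in> carrier R" and s: "s \<in> carrier R"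
  and u: "r \<oplus> s \<in> reg_elems R" and sn: "s \<in> nilrad R"
  shows "r \<in> reg_elems R"
  unfolding reg_elems_def
proof (safe intro!: r)
  fix t assume t: "t \<in> carrier R" and e: "r \<otimes> t = \<zero>"
  have key: "(r \<oplus> s) [^] (k::nat) \<otimes> t = s [^] k \<otimes> t" for k
  proof (induct k)
    case 0 then show ?case by simp
  next
    case (Suc k)
    have "(r \<oplus> s) [^] Suc k \<otimes> t = (r \<oplus> s) [^] k \<otimes> ((r \<oplus> s) \<otimes> t)"
      using r s t by (simp add: m_assoc nat_pow_Suc2)
    also have "(r \<oplus> s) \<otimes> t = s \<otimes> t" using r s t e by (simp add: l_distr)
    also have "(r \<oplus> s) [^] k \<otimes> (s \<otimes> t) = s \<otimes> ((r \<oplus> s) [^] k \<otimes> t)"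
      using r s t by (simp add: m_lcomm)
    also have "\<dots> = s [^] Suc k \<otimes> t" using Suc s t by (simp add: m_assoc m_lcomm)
    finally show ?case .
  qed
  obtain n where n: "s [^] (n::nat) = \<zero>" using sn by (auto simp: nilrad_def)
  have "(r \<oplus> s) [^] n \<otimes> t = \<zero>" using key[of n] n t by simp
  then show "t = \<zero>" using pow_reg[OF u, of n] t by (auto simp: reg_elems_def)
qed

lemma G: assumes sc: "semi_complemented TT" and r: "r \<in> carrier R" and rn: "r \<notin> nilrad R"
  shows "\<exists>s\<in>I. r \<otimes> s = \<zero> \<and> r \<oplus> s \<in> reg_elems R \<and> NZQ r"
proof -
  have a: "(r, \<one>\<^bsub>Q\<^esub>) \<in> carrier TT" using r by (simp add: T_carrier)
  then have "(r, \<one>\<^bsub>Q\<^esub>) \<notin> nilrad TT" using nil_T rn by blast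
  then have "complemented TT (r, \<one>\<^bsub>Q\<^esub>)" using sc a by (auto simp: semi_complemented_def)
  then obtain b where b: "b \<in> carrier TT" and e: "(r, \<one>\<^bsub>Q\<^esub>) \<otimes>\<^bsub>TT\<^esub> b = \<zero>\<^bsub>TT\<^esub>"
     and rg: "(r, \<one>\<^bsub>Q\<^esub>) \<oplus>\<^bsub>TT\<^esub> b \<in> reg_elems TT"
    by (auto simp: complemented_def)
  obtain s Y where bsY: "b = (s,Y)" by (cases b)
  have s: "s \<in> carrier R" and Y: "Y \<in> carrier Q" using b bsY by (auto simp: T_carrier)
  define p where "p = I +> r"
  define q where "q = I +> s"
  have p: "p \<in> carrier Q" and q: "q \<in> carrier Q" using r s p_def q_def by auto
  have rs: "r \<otimes> s = \<zero>" using e bsY by (simp add: T_mult T_zero)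
  have e2: "p \<otimes>\<^bsub>Q\<^esub> Y \<oplus>\<^bsub>Q\<^esub> q = \<zero>\<^bsub>Q\<^esub>" using e bsY q p_def q_def by (simp add: T_mult T_zero)
  have pq: "p \<otimes>\<^bsub>Q\<^esub> q = \<zero>\<^bsub>Q\<^esub>" using rs phi_mult[OF r s] p_def q_def by simp
  have "(r \<oplus> s, \<one>\<^bsub>Q\<^esub> \<oplus>\<^bsub>Q\<^esub> Y) \<in> reg_elems TT" using rg bsY by (simp add: T_add)
  then have rsreg: "r \<oplus> s \<in> reg_elems R" and nz: "NZQ (r \<oplus> s)"
    using reg_T[of "r \<oplus> s" "\<one>\<^bsub>Q\<^esub> \<oplus>\<^bsub>Q\<^esub> Y"] r s Y by (auto simp: T_carrier)
  have "q \<otimes>\<^bsub>Q\<^esub> (p \<otimes>\<^bsub>Q\<^esub> Y \<oplus>\<^bsub>Q\<^esub> q) = \<zero>\<^bsub>Q\<^esub>" using e2 q by simp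
  moreover have "q \<otimes>\<^bsub>Q\<^esub> (p \<otimes>\<^bsub>Q\<^esub> Y \<oplus>\<^bsub>Q\<^esub> q) = (p \<otimes>\<^bsub>Q\<^esub> q) \<otimes>\<^bsub>Q\<^esub> Y \<oplus>\<^bsub>Q\<^esub> q \<otimes>\<^bsub>Q\<^esub> q"
    using p q Y by (simp add: QQ.r_distr QQ.m_ac)
  ultimately have qq: "q \<otimes>\<^bsub>Q\<^esub> q = \<zero>\<^bsub>Q\<^esub>" using pq q Y by simp
  have "(I +> (r \<oplus> s)) \<otimes>\<^bsub>Q\<^esub> q = \<zero>\<^bsub>Q\<^esub>"
    using phi_add[OF r s] p q pq qq p_def q_def by (simp add: QQ.l_distr)
  then have q0: "q = \<zero>\<^bsub>Q\<^esub>" using nz q unfolding NZQ_def by blast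
  then have sI: "s \<in> I" using phi_zero_iff[OF s] q_def by simp
  have "I +> (r \<oplus> s) = I +> r" using phi_add[OF r s] q0 q_def p p_def by simp
  then have "NZQ r" using nz unfolding NZQ_def by simp
  then show ?thesis using sI rs rsreg by blast
qed

lemma F1: assumes sc: "semi_complemented TT" shows "I \<subseteq> nilrad R"
proof
  fix i assume i: "i \<in> I"
  then have ic: "i \<in> carrier R" using a_subset by blast
  show "i \<in> nilrad R"
  proof (rule ccontr)
    assume "i \<notin> nilrad R"
    then have "NZQ i" using G[OF sc ic] by blast
    moreover have "I +> i = \<zero>\<^bsub>Q\<^esub>" using phi_zero_iff[OF ic] i by simp
    ultimately have "\<one>\<^bsub>Q\<^esub> = \<zero>\<^bsub>Q\<^esub>" unfolding NZQ_def by simp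
    then show False using oneQ_ne by simp
  qed
qed

lemma DT_iff: "property_D TT \<longleftrightarrow> (\<forall>r\<in>carrier R - nilrad R. r \<in> reg_elems R \<and> NZQ r)"
proof
  assume d: "property_D TT"
  show "\<forall>r\<in>carrier R - nilrad R. r \<in> reg_elems R \<and> NZQ r"
  proof
    fix r assume r: "r \<in> carrier R - nilrad R"
    have c: "(r, \<zero>\<^bsub>Q\<^esub>) \<in> carrier TT" using r by (simp add: T_carrier)
    then have "(r, \<zero>\<^bsub>Q\<^esub>) \<notin> nilrad TT" using nil_T r by blast
    then have "(r, \<zero>\<^bsub>Q\<^esub>) \<in> reg_elems TT" using d c by (auto simp: property_D_def)
    then show "r \<in> reg_elems R \<and> NZQ r" using reg_T[OF c] by simp
  qed
next
  assume h: "\<forall>r\<in>carrier R - nilrad R. r \<in> reg_elems R \<and> NZQ r"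
  show "property_D TT" unfolding property_D_def
  proof (rule equalityI)
    show "carrier TT - nilrad TT \<subseteq> reg_elems TT"
    proof
      fix a assume a: "a \<in> carrier TT - nilrad TT"
      obtain r X where aX: "a = (r,X)" by (cases a)
      have c: "(r,X) \<in> carrier TT" using a aX by simp
      have "r \<notin> nilrad R" using a aX nil_T[OF c] by simp
      then show "a \<in> reg_elems TT" using h c aX reg_T[OF c] by (auto simp: T_carrier)
    qed
  next
    show "reg_elems TT \<subseteq> carrier TT - nilrad TT"
    proof
      fix a assume a: "a \<in> reg_elems TT"
      obtain r X where aX: "a = (r,X)" by (cases a)
      have c: "(r,X) \<in> carrier TT" using a aX by (simp add: reg_elems_def)
      have "r \<in> reg_elems R" using a aX reg_T[OF c] by simp
      then have "r \<notin> nilrad R" using reg_nonnil by blast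
      then show "a \<in> carrier TT - nilrad TT" using c aX nil_T[OF c] by simp
    qed
  qed
qed

lemma DR_iff: "property_D R \<longleftrightarrow> (\<forall>r\<in>carrier R - nilrad R. r \<in> reg_elems R)"
  unfolding property_D_def using reg_carr reg_nonnil by blast

lemma TF_iff: "torsion_free R (quot_module R I) \<longleftrightarrow> (\<forall>r\<in>reg_elems R. NZQ r)"
  by (simp add: torsion_free_def NZQ_def quot_module_def)

lemma DT_SC: assumes "property_D TT" shows "semi_complemented TT"
  unfolding semi_complemented_def
proof
  fix a assume a: "a \<in> carrier TT - nilrad TT"
  obtain r X where aX: "a = (r,X)" by (cases a)
  have c: "(r,X) \<in> carrier TT" using a aX by simp
  then have r: "r \<in> carrier R" and X: "X \<in> carrier Q" by (auto simp: T_carrier)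
  have ar: "a \<in> reg_elems TT" using a assms unfolding property_D_def by blast
  have "\<zero>\<^bsub>TT\<^esub> \<in> carrier TT" by (simp add: T_zero T_carrier)
  moreover have "a \<otimes>\<^bsub>TT\<^esub> \<zero>\<^bsub>TT\<^esub> = \<zero>\<^bsub>TT\<^esub>" using aX r X by (simp add: T_zero T_mult)
  moreover have "a \<oplus>\<^bsub>TT\<^esub> \<zero>\<^bsub>TT\<^esub> = a" using aX r X by (simp add: T_zero T_add)
  ultimately show "complemented TT a" using ar unfolding complemented_def by metis
qed

lemma SC_DT: assumes sc: "semi_complemented TT" shows "property_D TT"
  unfolding DT_iff
proof
  fix r assume r: "r \<in> carrier R - nilrad R"
  obtain s where s: "s \<in> I" and rs: "r \<oplus> s \<in> reg_elems R" and nz: "NZQ r"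
    using G[OF sc] r by blast
  have "s \<in> nilrad R" using F1[OF sc] s by blast
  moreover have "s \<in> carrier R" using s a_subset by blast
  ultimately have "r \<in> reg_elems R" using reg_minus_nil rs r by blast
  then show "r \<in> reg_elems R \<and> NZQ r" using nz by simp
qed

lemma main: "(semi_complemented TT \<longleftrightarrow> semi_complemented TT \<and> I \<subseteq> nilrad R)
       \<and> (semi_complemented TT \<longleftrightarrow> property_D TT)
       \<and> (semi_complemented TT \<longleftrightarrow> property_D R \<and> torsion_free R (quot_module R I))"
proof -
  have e: "property_D TT \<longleftrightarrow> property_D R \<and> torsion_free R (quot_module R I)"
    unfolding DT_iff DR_iff TF_iff using reg_carr reg_nonnil by blast
  show ?thesis using F1 DT_SC SC_DT e by blast
qed

end

theorem mainTheorem12: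
  fixes R :: "('a, 'c) ring_scheme" and I :: "'a set"
  assumes "cring R" and "ideal I R" and "I \<noteq> carrier R"
  defines "T \<equiv> triv_ext R (quot_module R I)"
  shows "(semi_complemented T \<longleftrightarrow> semi_complemented T \<and> I \<subseteq> nilrad R)
       \<and> (semi_complemented T \<longleftrightarrow> property_D T)
       \<and> (semi_complemented T \<longleftrightarrow> property_D R \<and> torsion_free R (quot_module R I))"
proof -
  interpret TE R I
    using assms by (simp add: TE_def TE_axioms_def)
  show ?thesis unfolding T_def by (rule main)
qed

end
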